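(* There exists a family of nonnegative constants $(m^\epsilon(j))_{\epsilon>0,\,j\in\mathbb{N}}$ such that: (1) for all sufficiently small $\epsilon>0$ and every $j\in\mathbb{N}$, one has $\tau_i^\epsilon(x)<m^\epsilon(j)$ for every $i\in\{0,1\}$ and every $x\in V_{1-i}^\epsilon(j)$; (2) $\lim_{\epsilon\downarrow0}\sum_{j=1}^\infty j\,e^{\nu j}m^\epsilon(j)=0$ for every $\nu\in[0,\alpha)$.
   Context: Fix $\alpha>\beta>0$. For $i\in\{0,1\}$ let $\Phi_i^t(x)=(i+(x_1-i)e^{-\alpha t},i+(x_2-i)e^{-\beta t})$ and $\Psi_i^t=\Phi_i^{-t}$. Let $\Gamma=\{(x_1,x_2):0\le x_2\le1,\ x_2^{\alpha/\beta}\le x_1\le1-(1-x_2)^{\alpha/\beta}\}$, $\Gamma^\circ$ its interior, and $D(x)=\alpha\beta(x_1-x_2)$. For $\epsilon>0$, $i\in\{0,1\}$ and $x\in\Gamma^\circ$ with $|D(x)|<\epsilon$, let $\tau_i^\epsilon(x)=\min\big(\sup\{t\ge0:|D(\Psi_i^tx)|<\epsilon\},\ \sup\{t\ge0:\Psi_i^t(x)\in\Gamma^\circ\}\big)$. For integers $j\ge2$ let $V_i^\epsilon(j)=\{x\in\Gamma^\circ:|D(x)|<\epsilon,\ \tau_i^\epsilon(x)\in(j-1,j]\}$, and let $V_i^\epsilon(1)=\{x\in\Gamma^\circ:|D(x)|<\epsilon,\ \tau_i^\epsilon(x)\in(\epsilon^{\beta/\alpha},1]\}$. Here $\mathbb{N}=\{1,2,\dots\}$.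 *)

theory Defs
  imports "HOL-Analysis.Analysis"
begin

definition Phi :: "real \<Rightarrow> real \<Rightarrow> nat \<Rightarrow> real \<Rightarrow> real \<times> real \<Rightarrow> real \<times> real" where
  "Phi \<alpha> \<beta> i t x = (real i + (fst x - real i) * exp (- \<alpha> * t),
                       real i + (snd x - real i) * exp (- \<beta> * t))"

definition Psi :: "real \<Rightarrow> real \<Rightarrow> nat \<Rightarrow> real \<Rightarrow> real \<times> real \<Rightarrow> real \<times> real" where
  "Psi \<alpha> \<beta> i t x = Phi \<alpha> \<beta> i (- t) x"

definition Gamma :: "real \<Rightarrow> real \<Rightarrow> (real \<times> real) set" where
  "Gamma \<alpha> \<beta> = {(x1, x2). 0 \<le> x2 \<and> x2 \<le> 1 \<and> x2 powr (\<alpha> / \<beta>) \<le> x1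
                        \<and> x1 \<le> 1 - (1 - x2) powr (\<alpha> / \<beta>)}"

definition Dfun :: "real \<Rightarrow> real \<Rightarrow> real \<times> real \<Rightarrow> real" where
  "Dfun \<alpha> \<beta> x = \<alpha> * \<beta> * (fst x - snd x)"

definition tau :: "real \<Rightarrow> real \<Rightarrow> real \<Rightarrow> nat \<Rightarrow> real \<times> real \<Rightarrow> real" where
  "tau \<alpha> \<beta> \<epsilon> i x =
     min (Sup {t. t \<ge> 0 \<and> \<bar>Dfun \<alpha> \<beta> (Psi \<alpha> \<beta> i t x)\<bar> < \<epsilon>})
         (Sup {t. t \<ge> 0 \<and> Psi \<alpha> \<beta> i t x \<in> interior (Gamma \<alpha> \<beta>)})"

definition V :: "real \<Rightarrow> real \<Rightarrow> real \<Rightarrow> nat \<Rightarrow> nat \<Rightarrow> (real \<times> real) set" where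
  "V \<alpha> \<beta> \<epsilon> i j =
     {x \<in> interior (Gamma \<alpha> \<beta>). \<bar>Dfun \<alpha> \<beta> x\<bar> < \<epsilon> \<and>
        (if j = 1 then \<epsilon> powr (\<beta> / \<alpha>) < tau \<alpha> \<beta> \<epsilon> i x \<and> tau \<alpha> \<beta> \<epsilon> i x \<le> 1
         else real j - 1 < tau \<alpha> \<beta> \<epsilon> i x \<and> tau \<alpha> \<beta> \<epsilon> i x \<le> real j)}"

end

theory Submission
  imports Defs
begin

lemma Psi_fst: "fst (Psi a b i t x) = real i + (fst x - real i) * exp (a * t)"
  by (simp add: Psi_def Phi_def)
lemma Psi_snd: "snd (Psi a b i t x) = real i + (snd x - real i) * exp (b * t)"
  by (simp add: Psi_def Phi_def)
lemma Psi_zero: "Psi a b i 0 x = x"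
  by (simp add: Psi_def Phi_def)
lemma Dfun_eq: "Dfun a b y = a * b * (fst y - snd y)"
  by (simp add: Dfun_def)

lemma Gamma_fst: assumes "y \<in> interior (Gamma a b)" shows "0 \<le> fst y \<and> fst y \<le> 1"
proof -
  have "y \<in> Gamma a b" using assms interior_subset by blast
  then obtain y1 y2 where y: "y = (y1, y2)" "y2 powr (a/b) \<le> y1" "y1 \<le> 1 - (1 - y2) powr (a/b)"
    by (auto simp: Gamma_def)
  have p1: "0 \<le> y2 powr (a/b)" and p2: "0 \<le> (1 - y2) powr (a/b)" by auto
  have "0 \<le> y1" using y(2) p1 by linarith
  moreover have "y1 \<le> 1" using y(3) p2 by linarith
  ultimately show ?thesis using y(1) by simp
qed

lemma sup_le: fixes S :: "real set" assumes "0 \<in> S" "\<And>t. t \<in> S \<Longrightarrow> t \<le> c" shows "Sup S \<le> c"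
  using assms by (intro cSup_least) auto

lemma sup_gt: fixes S :: "real set" assumes "0 \<in> S" "c < Sup S" shows "\<exists>t\<in>S. c < t"
  using sup_le[of S c] assms by force

lemma coreD:
  fixes a b e t al be :: real
  assumes "al > be" "be > 0" "a > 0" "al * be * \<bar>a - b\<bar> < e" "t \<ge> 0"
    "al * be * \<bar>a * exp (al * t) - b * exp (be * t)\<bar> < e"
  shows "t < 2 * e / (al * be * (al - be) * a)"
proof (rule ccontr)
  assume "\<not> ?thesis"
  hence h: "t \<ge> 2 * e / (al * be * (al - be) * a)" by simp
  define e' where "e' = e / (al * be)"
  have ab: "al * be > 0" using assms by simp
  have d1: "\<bar>a - b\<bar> < e'" using assms(4) ab by (simp add: e'_def field_simps)
  have d2: "\<bar>a * exp (al * t) - b * exp (be * t)\<bar> < e'" using assms(6) ab by (simp add: e'_def field_simps)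
  have e'pos: "e' > 0" using d1 by linarith
  have "2 * e / (al * be * (al - be) * a) = 2 * e' / ((al - be) * a)"
    by (simp add: e'_def field_simps)
  with h have "t * ((al - be) * a) \<ge> 2 * e'"
    using assms by (simp add: pos_divide_le_eq mult_pos_pos)
  hence h2: "a * ((al - be) * t) \<ge> 2 * e'" by (simp add: algebra_simps)
  have ex: "exp ((al - be) * t) \<ge> 1 + (al - be) * t" by (rule exp_ge_add_one_self)
  have ex2: "exp ((al - be) * t) - 1 \<ge> (al - be) * t" using ex by linarith
  have "a * (exp ((al - be) * t) - 1) \<ge> a * ((al - be) * t)"
    using mult_left_mono[OF ex2, of a] assms(3) by simp
  hence h3: "a * (exp ((al - be) * t) - 1) + (a - b) \<ge> e'" using h2 d1 by linarith
  have eq: "a * exp (al * t) - b * exp (be * t) = exp (be * t) * (a * (exp ((al - be) * t) - 1) + (a - b))"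
    by (simp add: algebra_simps flip: exp_add)
  have "exp (be * t) \<ge> 1" using assms by simp
  hence "exp (be * t) * (a * (exp ((al - be) * t) - 1) + (a - b)) \<ge> 1 * e'"
    using h3 e'pos by (intro mult_mono) auto
  with eq d2 show False by simp
qed

lemma coreG:
  fixes a t al :: real
  assumes "al > 0" "a > 0" "a * exp (al * t) \<le> 1"
  shows "t \<le> (1 - a) / (a * al)"
proof -
  have "exp (al * t) \<le> 1 / a" using assms by (simp add: field_simps)
  hence "al * t \<le> ln (1 / a)" using assms by (metis exp_le_cancel_iff exp_ln divide_pos_pos zero_less_one)
  also have "ln (1/a) \<le> 1/a - 1" using assms by (intro ln_le_minus_one) simp
  finally have "al * t \<le> (1 - a) / a" using assms by (simp add: field_simps)
  thus ?thesis using assms by (simp add: field_simps)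
qed

lemma coreL:
  fixes a t al T :: real
  assumes "al > 0" "(1 - a) * exp (al * t) \<le> 1" "T < t"
  shows "1 - a < exp (- al * T)"
proof -
  have "1 - a \<le> exp (- al * t)" using assms
    by (simp add: exp_minus field_simps)
  also have "exp (- al * t) < exp (- al * T)" using assms by simp
  finally show ?thesis .
qed

lemma generic_bound:
  fixes A B :: "real set"
  assumes "al > be" "be > 0" "T > 0" "0 \<in> A" "0 \<in> B"
    "1 - exp (- al * T) < a" "1 - a < exp (- al * T)"
    "al * be * \<bar>a - b\<bar> < e"
    "\<And>s. s \<in> A \<Longrightarrow> s \<ge> 0 \<and> al * be * \<bar>a * exp (al * s) - b * exp (be * s)\<bar> < e"
    "\<And>s. s \<in> B \<Longrightarrow> a * exp (al * s) \<le> 1"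
  shows "min (Sup A) (Sup B) \<le> 2 * e / (al * be * (al - be) * (1 - exp (- al * T)))"
    and "min (Sup A) (Sup B) \<le> exp (- al * T) / ((1 - exp (- al * T)) * al)"
proof -
  define L where "L = 1 - exp (- al * T)"
  have Lpos: "L > 0" using assms by (simp add: L_def)
  have aL: "L < a" using assms(6) by (simp add: L_def)
  have apos: "a > 0" using Lpos aL by linarith
  have epos: "e > 0" using assms(8) assms(1,2)
    by (smt (verit) mult_nonneg_nonneg abs_ge_zero)
  have "Sup A \<le> 2 * e / (al * be * (al - be) * L)"
  proof (rule sup_le[OF assms(4)])
    fix s assume "s \<in> A"
    with assms(9) have s: "s \<ge> 0" "al * be * \<bar>a * exp (al * s) - b * exp (be * s)\<bar> < e" by auto
    have "s < 2 * e / (al * be * (al - be) * a)"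
      using coreD[OF assms(1,2) apos assms(8) s] .
    also have "\<dots> \<le> 2 * e / (al * be * (al - be) * L)"
      using assms(1,2) epos Lpos aL
      by (intro divide_left_mono mult_left_mono mult_pos_pos) auto
    finally show "s \<le> 2 * e / (al * be * (al - be) * L)" by simp
  qed
  thus "min (Sup A) (Sup B) \<le> 2 * e / (al * be * (al - be) * (1 - exp (- al * T)))"
    unfolding L_def by linarith
  have "Sup B \<le> exp (- al * T) / (L * al)"
  proof (rule sup_le[OF assms(5)])
    fix s assume "s \<in> B"
    hence "s \<le> (1 - a) / (a * al)" using coreG[of al a s] assms(1,2,10) apos by auto
    also have "\<dots> \<le> exp (- al * T) / (L * al)"
      using assms(1,2,7) Lpos aL apos
      by (intro frac_le mult_right_mono mult_pos_pos) auto
    finally show "s \<le> exp (- al * T) / (L * al)" .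
  qed
  thus "min (Sup A) (Sup B) \<le> exp (- al * T) / ((1 - exp (- al * T)) * al)"
    unfolding L_def by linarith
qed

lemma tau_bound:
  fixes al be e T :: real
  assumes "al > be" "be > 0" "i \<in> {0,1}" "x \<in> interior (Gamma al be)"
    "\<bar>Dfun al be x\<bar> < e" "T > 0" "T < tau al be e (1 - i) x"
  shows "tau al be e i x \<le> 2 * e / (al * be * (al - be) * (1 - exp (- al * T)))
       \<and> tau al be e i x \<le> exp (- al * T) / ((1 - exp (- al * T)) * al)"
proof -
  define A where "A k = {t. t \<ge> 0 \<and> \<bar>Dfun al be (Psi al be k t x)\<bar> < e}" for k
  define B where "B k = {t. t \<ge> 0 \<and> Psi al be k t x \<in> interior (Gamma al be)}" for k
  have tau_eq: "tau al be e k x = min (Sup (A k)) (Sup (B k))" for k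
    by (simp add: tau_def A_def B_def)
  have A0: "0 \<in> A k" for k using assms(5) by (simp add: A_def Psi_zero)
  have B0: "0 \<in> B k" for k using assms(4) by (simp add: B_def Psi_zero)
  have "T < Sup (B (1 - i))" using assms(7) tau_eq by simp
  then obtain t where t: "t \<in> B (1 - i)" "T < t" using sup_gt[OF B0] by blast
  have g: "0 \<le> fst (Psi al be (1 - i) t x) \<and> fst (Psi al be (1 - i) t x) \<le> 1"
    using t(1) Gamma_fst unfolding B_def by blast
  have ab: "al * be > 0" using assms(1,2) by simp
  have alpos: "al > 0" using assms(1,2) by simp
  have absab: "\<bar>al\<bar> = al" "\<bar>be\<bar> = be" using assms(1,2) by auto
  have Dx: "al * be * \<bar>fst x - snd x\<bar> < e"
    using assms(5) absab by (simp add: Dfun_eq abs_mult)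
  from assms(3) consider "i = 0" | "i = 1" by blast
  thus ?thesis
  proof cases
    case 1
    let ?a = "fst x" and ?b = "snd x"
    have "(1 - ?a) * exp (al * t) \<le> 1" using g 1 by (simp add: Psi_fst algebra_simps)
    hence L2: "1 - ?a < exp (- al * T)" by (rule coreL[OF alpos _ t(2)])
    hence L: "1 - exp (- al * T) < ?a" by simp
    show ?thesis
      unfolding tau_eq 1
    proof (rule conjI; rule generic_bound[OF assms(1,2,6) A0 B0 L _ Dx])
      show "1 - ?a < exp (- al * T)" by fact
      show "1 - ?a < exp (- al * T)" by fact
      fix s assume "s \<in> A 0"
      thus "0 \<le> s \<and> al * be * \<bar>?a * exp (al * s) - ?b * exp (be * s)\<bar> < e"
        using ab absab by (simp add: A_def Dfun_eq Psi_fst Psi_snd abs_mult)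
    next
      fix s assume "s \<in> A 0"
      thus "0 \<le> s \<and> al * be * \<bar>?a * exp (al * s) - ?b * exp (be * s)\<bar> < e"
        using ab absab by (simp add: A_def Dfun_eq Psi_fst Psi_snd abs_mult)
    next
      fix s assume "s \<in> B 0"
      thus "?a * exp (al * s) \<le> 1" using Gamma_fst[of "Psi al be 0 s x" al be]
        by (simp add: B_def Psi_fst)
    next
      fix s assume "s \<in> B 0"
      thus "?a * exp (al * s) \<le> 1" using Gamma_fst[of "Psi al be 0 s x" al be]
        by (simp add: B_def Psi_fst)
    qed
  next
    case 2
    let ?a = "1 - fst x" and ?b = "1 - snd x"
    have Dx': "al * be * \<bar>?a - ?b\<bar> < e" using Dx by (simp add: abs_minus_commute)
    have "(1 - ?a) * exp (al * t) \<le> 1" using g 2 by (simp add: Psi_fst algebra_simps)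
    hence L2: "1 - ?a < exp (- al * T)" by (rule coreL[OF alpos _ t(2)])
    hence L: "1 - exp (- al * T) < ?a" by simp
    show ?thesis
      unfolding tau_eq 2
    proof (rule conjI; rule generic_bound[OF assms(1,2,6) A0 B0 L _ Dx'])
      show "1 - ?a < exp (- al * T)" by fact
      show "1 - ?a < exp (- al * T)" by fact
      fix s assume "s \<in> A 1"
      moreover have "Dfun al be (Psi al be 1 s x) = al * be * (?b * exp (be * s) - ?a * exp (al * s))"
        by (simp add: Dfun_eq Psi_fst Psi_snd algebra_simps)
      ultimately show "0 \<le> s \<and> al * be * \<bar>?a * exp (al * s) - ?b * exp (be * s)\<bar> < e"
        using absab unfolding A_def by (simp only: mem_Collect_eq abs_mult) (simp add: abs_minus_commute)
    next
      fix s assume "s \<in> A 1"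
      moreover have "Dfun al be (Psi al be 1 s x) = al * be * (?b * exp (be * s) - ?a * exp (al * s))"
        by (simp add: Dfun_eq Psi_fst Psi_snd algebra_simps)
      ultimately show "0 \<le> s \<and> al * be * \<bar>?a * exp (al * s) - ?b * exp (be * s)\<bar> < e"
        using absab unfolding A_def by (simp only: mem_Collect_eq abs_mult) (simp add: abs_minus_commute)
    next
      fix s assume "s \<in> B 1"
      thus "?a * exp (al * s) \<le> 1" using Gamma_fst[of "Psi al be 1 s x" al be]
        by (simp add: B_def Psi_fst algebra_simps)
    next
      fix s assume "s \<in> B 1"
      thus "?a * exp (al * s) \<le> 1" using Gamma_fst[of "Psi al be 1 s x" al be]
        by (simp add: B_def Psi_fst algebra_simps)
    qed
  qed
qed

lemma sum_j: fixes q :: real assumes "0 < q" "q < 1"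
  shows "summable (\<lambda>j. real (Suc j) * q ^ j)"
proof -
  have "summable (\<lambda>n. diffs (\<lambda>_. 1::real) n * q ^ n)"
    by (rule termdiff_converges[of q 1]) (use assms in \<open>auto intro: summable_geometric\<close>)
  thus ?thesis by (simp add: diffs_def)
qed

lemma min_powr: fixes a b th :: real assumes "a > 0" "b > 0" "0 \<le> th" "th \<le> 1"
  shows "min a b \<le> a powr th * b powr (1 - th)"
proof -
  have "min a b = min a b powr th * min a b powr (1 - th)"
    using assms by (simp add: powr_add[symmetric])
  also have "\<dots> \<le> a powr th * b powr (1 - th)"
    using assms by (intro mult_mono powr_mono2) auto
  finally show ?thesis .
qed

lemma m1_bound:
  fixes al be e :: real assumes "al > be" "be > 0" "e > 0"
  shows "e / (1 - exp (- al * e powr (be / al))) \<le> e powr (1 - be / al) / al + e"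
proof -
  define y where "y = al * e powr (be / al)"
  have ypos: "y > 0" using assms by (simp add: y_def)
  have "exp (- y) \<le> 1 / (1 + y)"
    using exp_ge_add_one_self[of y] ypos by (simp add: exp_minus field_simps)
  hence L: "1 - exp (- y) \<ge> y / (1 + y)" using ypos by (simp add: field_simps)
  have "e / (1 - exp (- y)) \<le> e / (y / (1 + y))"
    using L ypos assms(3) by (intro divide_left_mono) auto
  also have "\<dots> = e / y + e" using ypos by (simp add: field_simps)
  also have "e / y = e powr (1 - be / al) / al"
    using assms by (simp add: y_def powr_diff)
  finally show ?thesis by (simp add: y_def)
qed

lemma m1_lim:
  fixes al be :: real assumes "al > be" "be > 0"
  shows "((\<lambda>e. 4 * e / (al * be * (al - be) * (1 - exp (- al * e powr (be / al))))) \<longlongrightarrow> 0) (at_right 0)"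
proof (rule tendsto_sandwich[where f = "\<lambda>_. 0" and h = "\<lambda>e. 4 / (al * be * (al - be)) * (e powr (1 - be / al) / al + e)"])
  have C: "al * be * (al - be) > 0" using assms by simp
  show "\<forall>\<^sub>F e in at_right 0. 0 \<le> 4 * e / (al * be * (al - be) * (1 - exp (- al * e powr (be / al))))"
    using eventually_at_right_less[of 0] proof (rule eventually_mono)
    fix e :: real assume "0 < e"
    hence "1 - exp (- al * e powr (be / al)) > 0" using assms by simp
    thus "0 \<le> 4 * e / (al * be * (al - be) * (1 - exp (- al * e powr (be / al))))"
      using C \<open>0 < e\<close> by simp
  qed
  show "\<forall>\<^sub>F e in at_right 0. 4 * e / (al * be * (al - be) * (1 - exp (- al * e powr (be / al))))
       \<le> 4 / (al * be * (al - be)) * (e powr (1 - be / al) / al + e)"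
    using eventually_at_right_less[of 0] proof (rule eventually_mono)
    fix e :: real assume "0 < e"
    have "4 * e / (al * be * (al - be) * (1 - exp (- al * e powr (be / al))))
        = 4 / (al * be * (al - be)) * (e / (1 - exp (- al * e powr (be / al))))" by simp
    also have "\<dots> \<le> 4 / (al * be * (al - be)) * (e powr (1 - be / al) / al + e)"
      using C m1_bound[OF assms \<open>0 < e\<close>] by (intro mult_left_mono) auto
    finally show "4 * e / (al * be * (al - be) * (1 - exp (- al * e powr (be / al))))
       \<le> 4 / (al * be * (al - be)) * (e powr (1 - be / al) / al + e)" .
  qed
  show "((\<lambda>_. 0::real) \<longlongrightarrow> 0) (at_right 0)" by simp
  have p: "((\<lambda>e::real. e powr (1 - be / al)) \<longlongrightarrow> 0) (at_right 0)"
    by (rule tendsto_zero_powrI[where b = "1 - be/al"])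
       (use assms in \<open>auto intro: tendsto_ident_at eventually_at_right_less[THEN eventually_mono]\<close>)
  have i: "((\<lambda>e::real. e) \<longlongrightarrow> 0) (at_right 0)" by (rule tendsto_ident_at)
  show "((\<lambda>e. 4 / (al * be * (al - be)) * (e powr (1 - be / al) / al + e)) \<longlongrightarrow> 0) (at_right 0)"
  proof -
    have "((\<lambda>e. 4 / (al * be * (al - be)) * (e powr (1 - be / al) / al + e)) \<longlongrightarrow>
       4 / (al * be * (al - be)) * (0 / al + 0)) (at_right 0)"
      by (intro tendsto_mult tendsto_const tendsto_add tendsto_divide p i) (use assms in auto)
    thus ?thesis by simp
  qed
qed


theorem lemma7p10:
  fixes \<alpha> \<beta> :: real
  assumes "\<alpha> > \<beta>" and "\<beta> > 0"
  shows "\<exists>m :: real \<Rightarrow> nat \<Rightarrow> real.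
     (\<forall>\<epsilon>>0. \<forall>j\<ge>1. m \<epsilon> j \<ge> 0) \<and>
     (\<forall>\<^sub>F \<epsilon> in at_right 0. \<forall>j\<ge>1. \<forall>i\<in>{0,1}. \<forall>x\<in>V \<alpha> \<beta> \<epsilon> (1 - i) j.
         tau \<alpha> \<beta> \<epsilon> i x < m \<epsilon> j) \<and>
     (\<forall>\<nu>. 0 \<le> \<nu> \<and> \<nu> < \<alpha> \<longrightarrow>
        (\<forall>\<^sub>F \<epsilon> in at_right 0. summable (\<lambda>j. real j * exp (\<nu> * real j) * m \<epsilon> j)) \<and>
        ((\<lambda>\<epsilon>. \<Sum>j. real j * exp (\<nu> * real j) * m \<epsilon> j) \<longlongrightarrow> 0) (at_right 0))"
proof -
  have ab: "\<alpha> * \<beta> * (\<alpha> - \<beta>) > 0" using assms by simp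
  have alpos: "\<alpha> > 0" using assms by simp
  define c where "c = 1 - exp (- \<alpha>)"
  have cpos: "c > 0" using alpos by (simp add: c_def)
  define K where "K = max (2 / (\<alpha> * \<beta> * (\<alpha> - \<beta>) * c)) (exp \<alpha> / (c * \<alpha>))"
  have Kpos: "K > 0" using ab cpos alpos by (simp add: K_def less_max_iff_disj)
  define m where "m = (\<lambda>\<epsilon> j. if j = 0 then 0 else if j = 1
      then 4 * \<epsilon> / (\<alpha> * \<beta> * (\<alpha> - \<beta>) * (1 - exp (- \<alpha> * \<epsilon> powr (\<beta> / \<alpha>))))
      else 2 * K * min \<epsilon> (exp (- \<alpha> * real j)))"
  have L1pos: "1 - exp (- \<alpha> * \<epsilon> powr (\<beta> / \<alpha>)) > 0" if "\<epsilon> > 0" for \<epsilon>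
    using alpos that by simp
  have m_nonneg: "m \<epsilon> j \<ge> 0" if "\<epsilon> > 0" for \<epsilon> j
    using L1pos[OF that] ab Kpos that by (auto simp: m_def)
  have bound: "tau \<alpha> \<beta> \<epsilon> i x < m \<epsilon> j"
    if "\<epsilon> > 0" "j \<ge> 1" "i \<in> {0,1}" "x \<in> V \<alpha> \<beta> \<epsilon> (1 - i) j" for \<epsilon> j i x
  proof -
    have x: "x \<in> interior (Gamma \<alpha> \<beta>)" "\<bar>Dfun \<alpha> \<beta> x\<bar> < \<epsilon>" and
      xt: "if j = 1 then \<epsilon> powr (\<beta> / \<alpha>) < tau \<alpha> \<beta> \<epsilon> (1 - i) x \<and> tau \<alpha> \<beta> \<epsilon> (1 - i) x \<le> 1
           else real j - 1 < tau \<alpha> \<beta> \<epsilon> (1 - i) x \<and> tau \<alpha> \<beta> \<epsilon> (1 - i) x \<le> real j"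
      using that(4) unfolding V_def by auto
    show ?thesis
    proof (cases "j = 1")
      case True
      have T: "\<epsilon> powr (\<beta> / \<alpha>) > 0" using that(1) by simp
      have "\<epsilon> powr (\<beta> / \<alpha>) < tau \<alpha> \<beta> \<epsilon> (1 - i) x" using xt True by simp
      from tau_bound[OF assms(1,2) that(3) x T this]
      have "tau \<alpha> \<beta> \<epsilon> i x \<le> 2 * \<epsilon> / (\<alpha> * \<beta> * (\<alpha> - \<beta>) * (1 - exp (- \<alpha> * \<epsilon> powr (\<beta> / \<alpha>))))"
        by simp
      also have "\<dots> < m \<epsilon> j"
        using True L1pos[OF that(1)] ab that(1) by (simp add: m_def divide_strict_right_mono)
      finally show ?thesis .
    next
      case False
      with that(2) have j2: "j \<ge> 2" by simp
      define T where "T = real j - 1"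
      have T1: "T \<ge> 1" using j2 by (simp add: T_def)
      have "T < tau \<alpha> \<beta> \<epsilon> (1 - i) x" using xt False by (simp add: T_def)
      from tau_bound[OF assms(1,2) that(3) x _ this] T1
      have t1: "tau \<alpha> \<beta> \<epsilon> i x \<le> 2 * \<epsilon> / (\<alpha> * \<beta> * (\<alpha> - \<beta>) * (1 - exp (- \<alpha> * T)))"
        and t2: "tau \<alpha> \<beta> \<epsilon> i x \<le> exp (- \<alpha> * T) / ((1 - exp (- \<alpha> * T)) * \<alpha>)" by auto
      have ec: "exp (- \<alpha> * T) \<le> exp (- \<alpha>)" using T1 alpos by simp
      hence Lc: "1 - exp (- \<alpha> * T) \<ge> c" by (simp add: c_def)
      have "2 * \<epsilon> / (\<alpha> * \<beta> * (\<alpha> - \<beta>) * (1 - exp (- \<alpha> * T))) \<le> 2 * \<epsilon> / (\<alpha> * \<beta> * (\<alpha> - \<beta>) * c)"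
      proof (rule divide_left_mono)
        show "\<alpha> * \<beta> * (\<alpha> - \<beta>) * c \<le> \<alpha> * \<beta> * (\<alpha> - \<beta>) * (1 - exp (- \<alpha> * T))"
          using Lc ab by (intro mult_left_mono) auto
        show "0 \<le> 2 * \<epsilon>" using that(1) by simp
        have "0 < \<alpha> * \<beta> * (\<alpha> - \<beta>) * (1 - exp (- \<alpha> * T))" using ab Lc cpos by (intro mult_pos_pos[OF ab]) linarith
        thus "0 < \<alpha> * \<beta> * (\<alpha> - \<beta>) * (1 - exp (- \<alpha> * T)) * (\<alpha> * \<beta> * (\<alpha> - \<beta>) * c)"
          using ab cpos by simp
      qed
      also have "\<dots> = (2 / (\<alpha> * \<beta> * (\<alpha> - \<beta>) * c)) * \<epsilon>" by simp
      also have "\<dots> \<le> K * \<epsilon>" using that(1) by (intro mult_right_mono) (auto simp: K_def)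
      finally have b1: "tau \<alpha> \<beta> \<epsilon> i x \<le> K * \<epsilon>" using t1 by linarith
      have "exp (- \<alpha> * T) / ((1 - exp (- \<alpha> * T)) * \<alpha>) \<le> exp (- \<alpha> * T) / (c * \<alpha>)"
      proof (rule divide_left_mono)
        show "c * \<alpha> \<le> (1 - exp (- \<alpha> * T)) * \<alpha>" using Lc alpos by (intro mult_right_mono) auto
        show "0 \<le> exp (- \<alpha> * T)" by simp
        have "0 < 1 - exp (- \<alpha> * T)" using Lc cpos by linarith
        thus "0 < (1 - exp (- \<alpha> * T)) * \<alpha> * (c * \<alpha>)" using cpos alpos by simp
      qed
      also have "exp (- \<alpha> * T) / (c * \<alpha>) = (exp \<alpha> / (c * \<alpha>)) * exp (- \<alpha> * real j)"
        by (simp add: T_def algebra_simps flip: exp_add)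
      also have "\<dots> \<le> K * exp (- \<alpha> * real j)" by (intro mult_right_mono) (auto simp: K_def)
      finally have b2: "tau \<alpha> \<beta> \<epsilon> i x \<le> K * exp (- \<alpha> * real j)" using t2 by linarith
      have "tau \<alpha> \<beta> \<epsilon> i x \<le> K * min \<epsilon> (exp (- \<alpha> * real j))" using b1 b2 by (simp add: min_def)
      also have "\<dots> < 2 * K * min \<epsilon> (exp (- \<alpha> * real j))" using Kpos that(1) by simp
      also have "\<dots> = m \<epsilon> j" using j2 by (simp add: m_def)
      finally show ?thesis .
    qed
  qed
  have lim: "(\<forall>\<^sub>F \<epsilon> in at_right 0. summable (\<lambda>j. real j * exp (\<nu> * real j) * m \<epsilon> j)) \<and>
        ((\<lambda>\<epsilon>. \<Sum>j. real j * exp (\<nu> * real j) * m \<epsilon> j) \<longlongrightarrow> 0) (at_right 0)"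
    if nu: "0 \<le> \<nu>" "\<nu> < \<alpha>" for \<nu>
  proof -
    define th where "th = (\<alpha> - \<nu>) / (2 * \<alpha>)"
    define q where "q = exp (- ((\<alpha> - \<nu>) / 2))"
    have th: "0 < th" "th \<le> 1" using nu alpos by (auto simp: th_def field_simps)
    have q: "0 < q" "q < 1" using nu by (auto simp: q_def)
    define S where "S = (\<Sum>j. real (Suc j) * q ^ j)"
    have sS: "summable (\<lambda>j. real (Suc j) * q ^ j)" by (rule sum_j[OF q])
    define g where "g \<epsilon> j = real j * exp (\<nu> * real j) * m \<epsilon> j" for \<epsilon> j
    define h where "h \<epsilon> j = (if j = 1 then exp \<nu> * m \<epsilon> 1 else 0) + 2 * K * \<epsilon> powr th * (real (Suc j) * q ^ j)" for \<epsilon> j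
    have g_nonneg: "g \<epsilon> j \<ge> 0" if "\<epsilon> > 0" for \<epsilon> j using m_nonneg[OF that] by (simp add: g_def)
    have g_le: "g \<epsilon> j \<le> h \<epsilon> j" if "\<epsilon> > 0" for \<epsilon> j
    proof -
      have hn: "0 \<le> 2 * K * \<epsilon> powr th * (real (Suc j) * q ^ j)" using Kpos q by simp
      consider "j = 0" | "j = 1" | "j \<ge> 2" by linarith
      thus ?thesis
      proof cases
        case 1 thus ?thesis using hn by (simp add: g_def h_def)
      next
        case 2 thus ?thesis using hn by (simp add: g_def h_def)
      next
        case 3
        have "min \<epsilon> (exp (- \<alpha> * real j)) \<le> \<epsilon> powr th * exp (- \<alpha> * real j) powr (1 - th)"
          by (rule min_powr) (use that th in auto)
        also have "exp (- \<alpha> * real j) powr (1 - th) = exp (- \<alpha> * real j * (1 - th))"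
          by (simp add: exp_powr_real)
        finally have mn: "min \<epsilon> (exp (- \<alpha> * real j)) \<le> \<epsilon> powr th * exp (- \<alpha> * real j * (1 - th))" .
        have ex: "\<nu> * real j + (- \<alpha> * real j * (1 - th)) = real j * (- ((\<alpha> - \<nu>) / 2))"
          using alpos by (simp add: th_def field_simps)
        have qj: "exp (\<nu> * real j) * exp (- \<alpha> * real j * (1 - th)) = q ^ j"
          unfolding q_def by (simp only: exp_add[symmetric] ex exp_of_nat_mult)
        have "g \<epsilon> j = real j * exp (\<nu> * real j) * (2 * K * min \<epsilon> (exp (- \<alpha> * real j)))"
          using 3 by (simp add: g_def m_def)
        also have "\<dots> \<le> real j * exp (\<nu> * real j) * (2 * K * (\<epsilon> powr th * exp (- \<alpha> * real j * (1 - th))))"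
          using mn Kpos by (intro mult_left_mono) auto
        also have "\<dots> = 2 * K * \<epsilon> powr th * (real j * (exp (\<nu> * real j) * exp (- \<alpha> * real j * (1 - th))))"
          by (simp add: algebra_simps)
        also have "\<dots> = 2 * K * \<epsilon> powr th * (real j * q ^ j)" by (simp only: qj)
        also have "\<dots> \<le> 2 * K * \<epsilon> powr th * (real (Suc j) * q ^ j)"
          using Kpos q by (intro mult_left_mono mult_right_mono) auto
        also have "\<dots> = h \<epsilon> j" using 3 by (simp add: h_def)
        finally show ?thesis .
      qed
    qed
    have sh: "(h \<epsilon>) sums (exp \<nu> * m \<epsilon> 1 + 2 * K * \<epsilon> powr th * S)" for \<epsilon>
    proof -
      have s1: "(\<lambda>n. if n = 1 then exp \<nu> * m \<epsilon> 1 else 0) sums (exp \<nu> * m \<epsilon> 1)"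
        using sums_single[of 1 "\<lambda>_. exp \<nu> * m \<epsilon> 1"] by simp
      show ?thesis unfolding h_def S_def
        by (intro sums_add s1 sums_mult summable_sums sS)
    qed
    have sg: "summable (g \<epsilon>)" if "\<epsilon> > 0" for \<epsilon>
      by (rule summable_comparison_test'[OF sums_summable[OF sh], of 0])
         (use g_nonneg[OF that] g_le[OF that] in auto)
    have up: "suminf (g \<epsilon>) \<le> exp \<nu> * m \<epsilon> 1 + 2 * K * \<epsilon> powr th * S" if "\<epsilon> > 0" for \<epsilon>
      using suminf_le[OF g_le[OF that] sg[OF that] sums_summable[OF sh]] sums_unique[OF sh[of \<epsilon>]]
      by simp
    have lo: "suminf (g \<epsilon>) \<ge> 0" if "\<epsilon> > 0" for \<epsilon>
      by (rule suminf_nonneg[OF sg[OF that] g_nonneg[OF that]])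
    have m1: "((\<lambda>\<epsilon>. m \<epsilon> 1) \<longlongrightarrow> 0) (at_right 0)"
      using m1_lim[OF assms] by (simp add: m_def)
    have pw: "((\<lambda>\<epsilon>::real. \<epsilon> powr th) \<longlongrightarrow> 0) (at_right 0)"
      by (rule tendsto_zero_powrI[where b = th])
         (use th in \<open>auto intro: tendsto_ident_at eventually_at_right_less[THEN eventually_mono]\<close>)
    have "((\<lambda>\<epsilon>. exp \<nu> * m \<epsilon> 1 + 2 * K * \<epsilon> powr th * S) \<longlongrightarrow> exp \<nu> * 0 + 2 * K * 0 * S) (at_right 0)"
      by (intro tendsto_intros m1 pw)
    hence uplim: "((\<lambda>\<epsilon>. exp \<nu> * m \<epsilon> 1 + 2 * K * \<epsilon> powr th * S) \<longlongrightarrow> 0) (at_right 0)" by simp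
    have "((\<lambda>\<epsilon>. suminf (g \<epsilon>)) \<longlongrightarrow> 0) (at_right 0)"
    proof (rule tendsto_sandwich[OF _ _ tendsto_const uplim])
      show "\<forall>\<^sub>F \<epsilon> in at_right 0. 0 \<le> suminf (g \<epsilon>)"
        using eventually_at_right_less[of 0] by (rule eventually_mono) (rule lo)
      show "\<forall>\<^sub>F \<epsilon> in at_right 0. suminf (g \<epsilon>) \<le> exp \<nu> * m \<epsilon> 1 + 2 * K * \<epsilon> powr th * S"
        using eventually_at_right_less[of 0] by (rule eventually_mono) (rule up)
    qed
    moreover have "\<forall>\<^sub>F \<epsilon> in at_right 0. summable (g \<epsilon>)"
      by (auto intro: eventually_at_right_less[THEN eventually_mono] sg)
    ultimately show ?thesis unfolding g_def by simp
  qed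
  show ?thesis
    apply (rule exI[of _ m])
    apply (intro conjI allI impI)
      apply (simp add: m_nonneg)
     apply (rule eventually_mono[OF eventually_at_right_less[of 0]])
     apply (use bound in blast)
    apply (use lim in auto)
    done
qed

end
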